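(* Let $A\subset\mathbb{Z}^n$ be a finite set with $0\in A$, let $c_\alpha\in\mathbb{C}^*$ for $\alpha\in A$, and let $\rho:A\to\mathbb{R}$ be the restriction to $A$ of a convex piecewise linear function $\hat\rho$ on $\mathrm{Conv}(A)$ whose maximal domains of linearity define a polyhedral decomposition $\mathcal{P}$ of $\mathrm{Conv}(A)$ with vertex set exactly $A$, all of whose cells are congruent under $GL(n,\mathbb{Z})$ to standard simplices. For $\tau>0$ consider the Laurent polynomial $$f(x_1,\dots,x_n)=\sum_{\alpha\in A}c_\alpha\tau^{\rho(\alpha)}x_1^{\alpha_1}\cdots x_n^{\alpha_n},$$ normalized so that its constant term $c_0\tau^{\rho(0)}$ equals $1$. Assume that $0$ is a vertex of every maximal cell of $\mathcal{P}$. Then, for $\tau$ sufficiently small, all the critical points of $f$ on $(\mathbb{C}^* )^n$ lie in $\mathcal{U}_0$, and the critical values of $f$ converge to $1$ as $\tau\to 0$.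
   Context: The tropicalization of $f$ is $\varphi(\xi)=\max\{\langle\alpha,\xi\rangle-\rho(\alpha)\,|\,\alpha\in A\}$ for $\xi\in\mathbb{R}^n$; $\Gamma\subset\mathbb{R}^n$ is the tropical hypersurface where this maximum is not achieved uniquely, and $\Delta_0$ is the component of $\mathbb{R}^n\setminus\Gamma$ on which the maximum is achieved by $\alpha=0$. The logarithm map is $\mathrm{Log}(x_1,\dots,x_n)=\frac{1}{|\log\tau|}(\log|x_1|,\dots,\log|x_n|)$, and $\mathcal{U}_0=\mathrm{Log}^{-1}(\Delta_0)\subset(\mathbb{C}^* )^n$ is the region where the constant term of $f$ dominates all other monomials of $f$. *)

theory Defs
  imports "HOL-Analysis.Analysis"
begin

text \<open>Lattice points of Z^n are represented as int^'n, points of R^n as real^'n,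
  points of (C^*)^n as complex^'n with all coordinates nonzero.\<close>

definition rvec :: "int^'n \<Rightarrow> real^'n" where
  "rvec v = (\<chi> i. real_of_int (v $ i))"

definition rmat :: "int^'n^'n \<Rightarrow> real^'n^'n" where
  "rmat M = (\<chi> i j. real_of_int (M $ i $ j))"

definition std_simplex :: "'n set \<Rightarrow> (real^'n) set" where
  "std_simplex J = convex hull (insert 0 ((\<lambda>j. axis j 1) ` J))"

definition lattice_congruent :: "(real^'n) set \<Rightarrow> (real^'n) set \<Rightarrow> bool" where
  "lattice_congruent S T \<longleftrightarrow>
     (\<exists>(M::int^'n^'n) (t::int^'n). (det M = 1 \<or> det M = -1) \<and>
        S = (\<lambda>x. rmat M *v x + rvec t) ` T)"

definition lin_domain :: "(real^'n \<Rightarrow> real) \<Rightarrow> (real^'n) set \<Rightarrow> (real^'n) set \<Rightarrow> bool" where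
  "lin_domain g K D \<longleftrightarrow> D \<noteq> {} \<and> D \<subseteq> K \<and> convex D \<and>
     (\<exists>a b. \<forall>x\<in>D. g x = a \<bullet> x + b)"

definition max_lin_domains :: "(real^'n \<Rightarrow> real) \<Rightarrow> (real^'n) set \<Rightarrow> (real^'n) set set" where
  "max_lin_domains g K =
     {D. lin_domain g K D \<and> (\<forall>D'. lin_domain g K D' \<and> D \<subseteq> D' \<longrightarrow> D' = D)}"

definition laurent_f ::
  "(int^'n) set \<Rightarrow> (int^'n \<Rightarrow> complex) \<Rightarrow> (int^'n \<Rightarrow> real) \<Rightarrow> real \<Rightarrow> complex^'n \<Rightarrow> complex" where
  "laurent_f A c \<rho> \<tau> x =
     (\<Sum>\<alpha>\<in>A. c \<alpha> * complex_of_real (\<tau> powr \<rho> \<alpha>) * (\<Prod>i\<in>UNIV. ((x $ i) powi (\<alpha> $ i))))"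

definition torus :: "(complex^'n) set" where
  "torus = {x. \<forall>i. x $ i \<noteq> 0}"

definition critical_point :: "(complex^'n \<Rightarrow> complex) \<Rightarrow> complex^'n \<Rightarrow> bool" where
  "critical_point f x \<longleftrightarrow> (f has_derivative (\<lambda>_. 0)) (at x)"

definition Log_map :: "real \<Rightarrow> complex^'n \<Rightarrow> real^'n" where
  "Log_map \<tau> x = (\<chi> i. ln (norm (x $ i)) / \<bar>ln \<tau>\<bar>)"

text \<open>Delta_0: region of R^n where the maximum in the tropicalization
  phi(xi) = max {<alpha,xi> - rho(alpha)} is attained uniquely by alpha = 0.
  (This set is convex, hence it is the connected component of R^n - Gamma in question.)\<close>
definition Delta0 :: "(int^'n) set \<Rightarrow> (int^'n \<Rightarrow> real) \<Rightarrow> (real^'n) set" where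
  "Delta0 A \<rho> = {\<xi>. \<forall>\<alpha>\<in>A. \<alpha> \<noteq> 0 \<longrightarrow> rvec \<alpha> \<bullet> \<xi> - \<rho> \<alpha> < rvec 0 \<bullet> \<xi> - \<rho> 0}"

definition U0 :: "(int^'n) set \<Rightarrow> (int^'n \<Rightarrow> real) \<Rightarrow> real \<Rightarrow> (complex^'n) set" where
  "U0 A \<rho> \<tau> = {x \<in> torus. Log_map \<tau> x \<in> Delta0 A \<rho>}"

end

theory Submission
  imports Defs
begin


lemma det_rmat: "det (rmat M) = real_of_int (det M)"
  unfolding det_def rmat_def by (simp add: of_int_sum of_int_prod)

lemma cell_struct:
  fixes D :: "(real^'n) set"
  assumes "lattice_congruent D (std_simplex J)"
  shows "\<exists>G. finite G \<and> \<not> affine_dependent G \<and> D = convex hull G"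
proof -
  obtain Mm t where det: "det Mm = 1 \<or> det Mm = -1"
    and D: "D = (\<lambda>x. rmat Mm *v x + rvec t) ` std_simplex J"
    using assms unfolding lattice_congruent_def by blast
  define L where "L = (\<lambda>x::real^'n. rmat Mm *v x)"
  have linL: "linear L" unfolding L_def by (simp add: matrix_vector_mul_linear)
  have "det (rmat Mm) \<noteq> 0" using det by (auto simp: det_rmat)
  then have "invertible (rmat Mm)" by (simp add: invertible_det_nz)
  then have injL: "inj L" unfolding L_def
    by (metis inj_matrix_vector_mult invertible_left_inverse)
  define B where "B = (\<lambda>j. axis j (1::real)) ` J"
  have indB: "independent B"
    by (rule independent_mono[OF independent_Basis]) (auto simp: B_def Basis_vec_def)
  have "0 \<notin> B" by (auto simp: B_def axis_eq_0_iff)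
  have indLB: "independent (L ` B)"
    using indB injL linL by (meson inj_on_subset subset_UNIV linear_independent_injective_image)
  have "0 \<notin> L ` B" using \<open>0 \<notin> B\<close> injL linL
    by (metis image_iff inj_eq linear_0)
  then have "\<not> affine_dependent (insert 0 (L ` B))"
    using indLB by (simp add: affine_dependent_iff_dependent)
  moreover have "L ` insert 0 B = insert 0 (L ` B)" using linL by (simp add: linear_0)
  ultimately have ai: "\<not> affine_dependent ((\<lambda>x. rvec t + x) ` (L ` insert 0 B))"
    by (metis affine_dependent_translation_eq)
  define G where "G = (\<lambda>x. rvec t + x) ` (L ` insert 0 B)"
  have "D = (\<lambda>x. rvec t + x) ` (L ` (convex hull (insert 0 B)))"
    unfolding D std_simplex_def B_def L_def by (auto simp: image_image add.commute)
  also have "\<dots> = convex hull G"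
    unfolding G_def convex_hull_linear_image[OF linL] convex_hull_translation[symmetric] ..
  finally have "D = convex hull G" .
  moreover have "finite G" unfolding G_def B_def by simp
  ultimately show ?thesis using ai G_def by blast
qed




lemma farkas:
  fixes a :: "'i \<Rightarrow> real^'n" and b :: "'i \<Rightarrow> real"
  assumes finI: "finite I" and inf: "\<not>(\<exists>\<xi>. \<forall>i\<in>I. a i \<bullet> \<xi> \<le> b i)"
  shows "\<exists>l. (\<forall>i\<in>I. l i \<ge> 0) \<and> (\<Sum>i\<in>I. l i *\<^sub>R a i) = 0 \<and> (\<Sum>i\<in>I. l i * b i) < 0"
proof -
  define V :: "((real^'n) \<times> real) set" where "V = insert (0,1) ((\<lambda>i. (a i, b i)) ` I)"
  define Cx :: "((real^'n) \<times> real) set" where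
    "Cx = {(\<Sum>i\<in>I. m i *\<^sub>R (a i, b i)) + v *\<^sub>R (0,1) | m v. (\<forall>i\<in>I. m i \<ge> 0) \<and> v \<ge> 0}"
  have ccx: "convex_cone Cx"
    unfolding convex_cone_iff
  proof (intro conjI ballI allI impI)
    show "0 \<in> Cx" unfolding Cx_def
      by (rule CollectI, rule exI[of _ "\<lambda>_. 0"], rule exI[of _ 0]) (simp flip: zero_prod_def)
  next
    fix x y assume "x \<in> Cx" "y \<in> Cx"
    then obtain m v m' v' where x: "x = (\<Sum>i\<in>I. m i *\<^sub>R (a i, b i)) + v *\<^sub>R (0,1)"
        "\<forall>i\<in>I. m i \<ge> 0" "v \<ge> 0"
      and y: "y = (\<Sum>i\<in>I. m' i *\<^sub>R (a i, b i)) + v' *\<^sub>R (0,1)" "\<forall>i\<in>I. m' i \<ge> 0" "v' \<ge> 0"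
      unfolding Cx_def by blast
    have "x + y = (\<Sum>i\<in>I. (m i + m' i) *\<^sub>R (a i, b i)) + (v + v') *\<^sub>R (0,1)"
      unfolding x y by (simp only: scaleR_add_left sum.distrib add_ac)
    then show "x + y \<in> Cx" unfolding Cx_def using x y
      by (intro CollectI exI[of _ "\<lambda>i. m i + m' i"] exI[of _ "v + v'"]) auto
  next
    fix x and c :: real assume "x \<in> Cx" "0 \<le> c"
    then obtain m v where x: "x = (\<Sum>i\<in>I. m i *\<^sub>R (a i, b i)) + v *\<^sub>R (0,1)"
        "\<forall>i\<in>I. m i \<ge> 0" "v \<ge> 0"
      unfolding Cx_def by blast
    have "c *\<^sub>R x = (\<Sum>i\<in>I. (c * m i) *\<^sub>R (a i, b i)) + (c * v) *\<^sub>R (0,1)"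
      unfolding x by (simp only: scaleR_right_distrib scaleR_sum_right scaleR_scaleR)
    then show "c *\<^sub>R x \<in> Cx" unfolding Cx_def using x \<open>0 \<le> c\<close>
      by (intro CollectI exI[of _ "\<lambda>i. c * m i"] exI[of _ "c * v"]) auto
  qed
  have VC: "V \<subseteq> Cx"
  proof
    fix z assume "z \<in> V"
    then consider "z = (0,1)" | i where "i \<in> I" "z = (a i, b i)" unfolding V_def by blast
    then show "z \<in> Cx"
    proof cases
      case 1 then show ?thesis unfolding Cx_def
        by (intro CollectI exI[of _ "\<lambda>_. 0"] exI[of _ 1]) (simp flip: zero_prod_def)
    next
      case 2
      have "(\<Sum>k\<in>I. (if k = i then 1 else 0) *\<^sub>R (a k, b k)) = (a i, b i)"
      proof -
        have "(\<Sum>k\<in>I. (if k = i then 1 else 0) *\<^sub>R (a k, b k)) = (\<Sum>k\<in>I. if k = i then (a k, b k) else 0)"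
          by (rule sum.cong) (auto simp flip: zero_prod_def)
        also have "\<dots> = (a i, b i)" using 2 finI by (simp only: sum.delta) simp
        finally show ?thesis .
      qed
      then show ?thesis unfolding Cx_def using 2
        by (intro CollectI exI[of _ "\<lambda>k. if k = i then 1 else 0"] exI[of _ 0]) simp
    qed
  qed
  define C where "C = convex_cone hull V"
  have CCx: "C \<subseteq> Cx" unfolding C_def using VC ccx by (simp add: hull_minimal)
  have "finite V" unfolding V_def using finI by simp
  then have clC: "closed C" unfolding C_def by (rule closed_convex_cone_hull)
  have cvC: "convex C" unfolding C_def by (rule convex_convex_cone_hull)
  have ccC: "convex_cone C" unfolding C_def by (rule convex_cone_convex_cone_hull)
  have VsC: "V \<subseteq> C" unfolding C_def by (rule hull_subset)
  have "(0,-1) \<in> C"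
  proof (rule ccontr)
    assume "(0,-1) \<notin> C"
    then obtain p c where pc: "inner p (0,-1) < c" "\<forall>x\<in>C. inner p x > c"
      using separating_hyperplane_closed_point[OF cvC clC] by blast
    have "0 \<in> C" using ccC by (simp add: convex_cone_contains_0)
    then have "c < 0" using pc by auto
    have nn: "inner p x \<ge> 0" if "x \<in> C" for x
    proof (rule ccontr)
      assume "\<not> inner p x \<ge> 0"
      then have neg: "inner p x < 0" by simp
      define s where "s = (c - 1) / inner p x"
      have "s \<ge> 0" unfolding s_def using neg \<open>c < 0\<close> by (simp add: divide_nonpos_neg)
      then have "s *\<^sub>R x \<in> C" using ccC that convex_cone_scaleR by blast
      moreover have "inner p (s *\<^sub>R x) = c - 1" unfolding s_def using neg by simp
      ultimately show False using pc by force
    qed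
    have "inner p (0,1) \<ge> 0" using nn VsC unfolding V_def by auto
    have sp: "snd p > 0" using pc(1) \<open>c < 0\<close> by (cases p) simp
    define \<xi> where "\<xi> = (- (1 / snd p)) *\<^sub>R fst p"
    have "a i \<bullet> \<xi> \<le> b i" if "i \<in> I" for i
    proof -
      have "inner p (a i, b i) \<ge> 0" using nn VsC that unfolding V_def by auto
      then have "fst p \<bullet> a i + snd p * b i \<ge> 0" by (cases p) simp
      moreover have eq: "a i \<bullet> \<xi> = (- (fst p \<bullet> a i)) / snd p"
        unfolding \<xi>_def by (simp add: inner_commute)
      ultimately have h: "- b i * snd p \<le> fst p \<bullet> a i" by (simp add: algebra_simps)
      have "- b i \<le> (fst p \<bullet> a i) / snd p" using h sp by (simp add: pos_le_divide_eq)
      then show ?thesis unfolding eq by simp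
    qed
    then show False using inf by blast
  qed
  then have "(0,-1) \<in> Cx" using CCx by blast
  then obtain m v where mv: "(0::real^'n,-1::real) = (\<Sum>i\<in>I. m i *\<^sub>R (a i, b i)) + v *\<^sub>R (0,1)"
        "\<forall>i\<in>I. m i \<ge> 0" "v \<ge> 0"
    unfolding Cx_def by blast
  have "(\<Sum>i\<in>I. m i *\<^sub>R a i) = 0"
    using arg_cong[OF mv(1), of fst] by (simp add: fst_sum)
  moreover have "(\<Sum>i\<in>I. m i * b i) = -1 - v"
    using arg_cong[OF mv(1), of snd] by (simp add: snd_sum)
  ultimately show ?thesis using mv(2,3)
    by (intro exI[of _ m]) auto
qed




lemma lin_domain_in_max:
  fixes g :: "real^'n \<Rightarrow> real"
  assumes C: "lin_domain g K C"
  shows "\<exists>D\<in>max_lin_domains g K. C \<subseteq> D"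
proof -
  define \<A> where "\<A> = {D. lin_domain g K D \<and> C \<subseteq> D}"
  have "\<A> \<noteq> {}" using C unfolding \<A>_def by blast
  moreover have "\<Union>\<C> \<in> \<A>" if ne: "\<C> \<noteq> {}" and ch: "subset.chain \<A> \<C>" for \<C>
  proof -
    have sub: "\<C> \<subseteq> \<A>" and tot: "\<And>X Y. X \<in> \<C> \<Longrightarrow> Y \<in> \<C> \<Longrightarrow> X \<subseteq> Y \<or> Y \<subseteq> X"
      using ch unfolding subset.chain_def by auto
    define ds where "ds = aff_dim ` \<C>"
    have "ds \<subseteq> {-1..int DIM((real,'n) vec)}" unfolding ds_def
      using aff_dim_geq aff_dim_le_DIM by (auto simp del: DIM_cart)
    then have "finite ds" by (rule finite_subset) simp
    moreover have "ds \<noteq> {}" using ne unfolding ds_def by simp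
    ultimately have "Max ds \<in> ds" by simp
    then obtain C0 where C0: "C0 \<in> \<C>" "aff_dim C0 = Max ds" unfolding ds_def by auto
    have maxd: "aff_dim X \<le> aff_dim C0" if "X \<in> \<C>" for X
      using C0 \<open>finite ds\<close> that unfolding ds_def by simp
    obtain a0 b0 where ab0: "\<forall>x\<in>C0. g x = a0 \<bullet> x + b0"
      using sub C0 unfolding \<A>_def lin_domain_def by blast
    have rep: "g x = a0 \<bullet> x + b0" if XC: "X \<in> \<C>" and xX: "x \<in> X" for X x
    proof (cases "X \<subseteq> C0")
      case True then show ?thesis using ab0 xX by blast
    next
      case False
      then have "C0 \<subseteq> X" using tot C0 XC by blast
      obtain aX bX where abX: "\<forall>x\<in>X. g x = aX \<bullet> x + bX"
        using sub XC unfolding \<A>_def lin_domain_def by blast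
      have "C0 \<noteq> {}" using sub C0 unfolding \<A>_def lin_domain_def by blast
      have "aff_dim X = aff_dim C0" using maxd[OF XC] aff_dim_subset[OF \<open>C0 \<subseteq> X\<close>] by simp
      then have eqh: "affine hull C0 = affine hull X"
        by (intro affine_dim_equal) (auto simp: \<open>C0 \<noteq> {}\<close> hull_mono \<open>C0 \<subseteq> X\<close>)
      have "C0 \<subseteq> {y. (a0 - aX) \<bullet> y = bX - b0}"
      proof
        fix y assume "y \<in> C0"
        then have "a0 \<bullet> y + b0 = aX \<bullet> y + bX" using ab0 abX \<open>C0 \<subseteq> X\<close> by force
        then show "y \<in> {y. (a0 - aX) \<bullet> y = bX - b0}" by (simp add: inner_diff_left algebra_simps)
      qed
      then have "affine hull C0 \<subseteq> {y. (a0 - aX) \<bullet> y = bX - b0}"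
        by (simp add: hull_minimal affine_hyperplane)
      moreover have "x \<in> affine hull C0" using eqh xX hull_inc by metis
      ultimately have "(a0 - aX) \<bullet> x = bX - b0" by blast
      then show ?thesis using abX xX by (simp add: inner_diff_left algebra_simps)
    qed
    have cvx: "convex (\<Union>\<C>)"
    proof (rule convexI)
      fix x y :: "real^'n" and u v :: real
      assume "x \<in> \<Union>\<C>" "y \<in> \<Union>\<C>" "0 \<le> u" "0 \<le> v" "u + v = 1"
      then obtain X Y where XY: "X \<in> \<C>" "Y \<in> \<C>" "x \<in> X" "y \<in> Y" by blast
      then have "\<exists>Z\<in>\<C>. x \<in> Z \<and> y \<in> Z" using tot by blast
      then obtain Z where "Z \<in> \<C>" "x \<in> Z" "y \<in> Z" by blast
      moreover have "convex Z" using sub \<open>Z \<in> \<C>\<close> unfolding \<A>_def lin_domain_def by blast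
      ultimately show "u *\<^sub>R x + v *\<^sub>R y \<in> \<Union>\<C>"
        using \<open>0 \<le> u\<close> \<open>0 \<le> v\<close> \<open>u + v = 1\<close> by (meson UnionI convexD)
    qed
    show ?thesis unfolding \<A>_def lin_domain_def
      using sub ne rep cvx unfolding \<A>_def lin_domain_def by blast
  qed
  ultimately obtain M where M: "M \<in> \<A>" "\<forall>X\<in>\<A>. M \<subseteq> X \<longrightarrow> X = M"
    using subset_Zorn_nonempty[of \<A>] by blast
  then have "M \<in> max_lin_domains g K"
    unfolding max_lin_domains_def \<A>_def by blast
  then show ?thesis using M unfolding \<A>_def by blast
qed




lemma euler:
  fixes A :: "(int^'n) set" and x :: "complex^'n"
  assumes finA: "finite A" and xt: "x \<in> torus"
    and cp: "critical_point (laurent_f A c \<rho> \<tau>) x"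
  shows "(\<Sum>\<alpha>\<in>A. of_int (\<alpha>$j) * (c \<alpha> * complex_of_real (\<tau> powr \<rho> \<alpha>) *
            (\<Prod>i\<in>UNIV. (x$i) powi (\<alpha>$i)))) = 0"
proof -
  let ?f = "laurent_f A c \<rho> \<tau>"
  define e where "e = (\<lambda>z::complex. (\<chi> i. if i = j then z else x$i) :: complex^'n)"
  define x0 where "x0 = ((\<chi> i. if i = j then 0 else x$i) :: complex^'n)"
  have e_eq: "e = (\<lambda>z. x0 + axis j z)"
    unfolding e_def x0_def by (auto simp: fun_eq_iff vec_eq_iff axis_def)
  have linax: "linear (\<lambda>z::complex. axis j z :: complex^'n)"
    by (rule linearI) (simp_all add: vec_eq_iff axis_def)
  have de: "(e has_derivative (\<lambda>z. axis j z)) (at (x$j))"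
    unfolding e_eq using has_derivative_add[OF has_derivative_const[of x0] linear_imp_has_derivative[OF linax]] by simp
  have ex: "e (x$j) = x" unfolding e_def by (simp add: vec_eq_iff)
  have dcp: "(?f has_derivative (\<lambda>_. 0)) (at (e (x$j)))" using cp ex unfolding critical_point_def by simp
  have "((\<lambda>z. ?f (e z)) has_derivative (\<lambda>h. 0)) (at (x$j))"
    using has_derivative_compose[OF de dcp] by simp
  then have d0: "((\<lambda>z. ?f (e z)) has_field_derivative 0) (at (x$j))"
  proof -
    have "(\<lambda>h::complex. 0::complex) = (*) 0" by (simp add: fun_eq_iff)
    then show ?thesis using \<open>((\<lambda>z. ?f (e z)) has_derivative (\<lambda>h. 0)) (at (x$j))\<close>
      unfolding has_field_derivative_def by simp
  qed
  define K where "K \<alpha> = c \<alpha> * complex_of_real (\<tau> powr \<rho> \<alpha>) * (\<Prod>i\<in>UNIV-{j}. (x$i) powi (\<alpha>$i))" for \<alpha>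
  have Feq: "(\<lambda>z. ?f (e z)) = (\<lambda>z. \<Sum>\<alpha>\<in>A. K \<alpha> * z powi (\<alpha>$j))"
  proof
    fix z
    have "(\<Prod>i\<in>UNIV. (e z $ i) powi (\<alpha>$i)) = z powi (\<alpha>$j) * (\<Prod>i\<in>UNIV-{j}. (x$i) powi (\<alpha>$i))" for \<alpha>
    proof -
      have "(\<Prod>i\<in>UNIV. (e z $ i) powi (\<alpha>$i)) = (e z $ j) powi (\<alpha>$j) * (\<Prod>i\<in>UNIV-{j}. (e z $ i) powi (\<alpha>$i))"
        by (simp add: prod.remove)
      also have "(\<Prod>i\<in>UNIV-{j}. (e z $ i) powi (\<alpha>$i)) = (\<Prod>i\<in>UNIV-{j}. (x$i) powi (\<alpha>$i))"
        by (rule prod.cong) (auto simp: e_def)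
      finally show ?thesis by (simp add: e_def)
    qed
    then show "?f (e z) = (\<Sum>\<alpha>\<in>A. K \<alpha> * z powi (\<alpha>$j))"
      unfolding laurent_f_def K_def by (simp add: mult_ac)
  qed
  have xj: "x$j \<noteq> 0" using xt unfolding torus_def by simp
  have d1: "((\<lambda>z. \<Sum>\<alpha>\<in>A. K \<alpha> * z powi (\<alpha>$j)) has_field_derivative
      (\<Sum>\<alpha>\<in>A. K \<alpha> * (of_int (\<alpha>$j) * (x$j) powi (\<alpha>$j - 1) * 1))) (at (x$j))"
    by (intro DERIV_sum DERIV_cmult DERIV_power_int DERIV_ident) (simp add: xj)
  have "(\<Sum>\<alpha>\<in>A. K \<alpha> * (of_int (\<alpha>$j) * (x$j) powi (\<alpha>$j - 1) * 1)) = 0"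
    using DERIV_unique[OF d1 d0[unfolded Feq]] .
  then have "(\<Sum>\<alpha>\<in>A. K \<alpha> * (of_int (\<alpha>$j) * (x$j) powi (\<alpha>$j - 1) * 1)) * x$j = 0" by (simp only: mult_zero_left)
  moreover have "(\<Sum>\<alpha>\<in>A. K \<alpha> * (of_int (\<alpha>$j) * (x$j) powi (\<alpha>$j - 1) * 1)) * x$j =
      (\<Sum>\<alpha>\<in>A. of_int (\<alpha>$j) * (c \<alpha> * complex_of_real (\<tau> powr \<rho> \<alpha>) * (\<Prod>i\<in>UNIV. (x$i) powi (\<alpha>$i))))"
    unfolding sum_distrib_right
  proof (rule sum.cong[OF refl])
    fix \<alpha> assume "\<alpha> \<in> A"
    have "(\<Prod>i\<in>UNIV. (x$i) powi (\<alpha>$i)) = (x$j) powi (\<alpha>$j) * (\<Prod>i\<in>UNIV-{j}. (x$i) powi (\<alpha>$i))"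
      by (simp add: prod.remove)
    moreover have "(x$j) powi (\<alpha>$j - 1) * x$j = (x$j) powi (\<alpha>$j)"
      using xj by (rule power_int_minus_mult[OF disjI1])
    ultimately show "K \<alpha> * (of_int (\<alpha>$j) * (x$j) powi (\<alpha>$j - 1) * 1) * x$j =
      of_int (\<alpha>$j) * (c \<alpha> * complex_of_real (\<tau> powr \<rho> \<alpha>) * (\<Prod>i\<in>UNIV. (x$i) powi (\<alpha>$i)))"
      unfolding K_def by (simp add: mult_ac)
  qed
  ultimately show ?thesis by metis
qed




lemma norm_monomial:
  fixes x :: "complex^'n" and \<alpha> :: "int^'n"
  assumes xt: "x \<in> torus" and t0: "0 < \<tau>" and t1: "\<tau> < 1"
  shows "norm (c \<alpha> * complex_of_real (\<tau> powr \<rho> \<alpha>) * (\<Prod>i\<in>UNIV. (x$i) powi (\<alpha>$i)))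
       = norm (c \<alpha>) * exp ((- ln \<tau>) * (rvec \<alpha> \<bullet> Log_map \<tau> x - \<rho> \<alpha>))"
proof -
  define L where "L = - ln \<tau>"
  have L0: "L > 0" unfolding L_def using t0 t1 by simp
  have absL: "\<bar>ln \<tau>\<bar> = L" unfolding L_def using t0 t1 by simp
  have nz: "norm (x$i) > 0" for i using xt unfolding torus_def by simp
  have "norm (\<Prod>i\<in>UNIV. (x$i) powi (\<alpha>$i)) = (\<Prod>i\<in>UNIV. norm (x$i) powi (\<alpha>$i))"
    by (simp add: prod_norm[symmetric] norm_power_int)
  also have "\<dots> = (\<Prod>i\<in>UNIV. exp (real_of_int (\<alpha>$i) * ln (norm (x$i))))"
  proof (rule prod.cong[OF refl])
    fix i
    have "norm (x$i) powi (\<alpha>$i) = norm (x$i) powr real_of_int (\<alpha>$i)"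
      using nz[of i] by (simp add: powr_real_of_int')
    also have "\<dots> = exp (real_of_int (\<alpha>$i) * ln (norm (x$i)))"
      using nz[of i] by (simp add: powr_def mult.commute)
    finally show "norm (x$i) powi (\<alpha>$i) = exp (real_of_int (\<alpha>$i) * ln (norm (x$i)))" .
  qed
  also have "\<dots> = exp (\<Sum>i\<in>UNIV. real_of_int (\<alpha>$i) * ln (norm (x$i)))"
    by (simp add: exp_sum)
  also have "(\<Sum>i\<in>UNIV. real_of_int (\<alpha>$i) * ln (norm (x$i))) = L * (rvec \<alpha> \<bullet> Log_map \<tau> x)"
    unfolding inner_vec_def rvec_def Log_map_def absL using L0
    by (simp add: sum_distrib_left)
  finally have np: "norm (\<Prod>i\<in>UNIV. (x$i) powi (\<alpha>$i)) = exp (L * (rvec \<alpha> \<bullet> Log_map \<tau> x))" .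
  have "norm (complex_of_real (\<tau> powr \<rho> \<alpha>)) = exp (- L * \<rho> \<alpha>)"
    using t0 unfolding L_def by (simp add: powr_def mult.commute)
  then have "norm (c \<alpha> * complex_of_real (\<tau> powr \<rho> \<alpha>) * (\<Prod>i\<in>UNIV. (x$i) powi (\<alpha>$i)))
     = norm (c \<alpha>) * (exp (- L * \<rho> \<alpha>) * exp (L * (rvec \<alpha> \<bullet> Log_map \<tau> x)))"
    using np by (simp add: norm_mult)
  also have "exp (- L * \<rho> \<alpha>) * exp (L * (rvec \<alpha> \<bullet> Log_map \<tau> x)) = exp (L * (rvec \<alpha> \<bullet> Log_map \<tau> x - \<rho> \<alpha>))"
    by (simp add: exp_add[symmetric] algebra_simps)
  finally show ?thesis unfolding L_def .
qed


theorem lemma5p2: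
  fixes A :: "(int^'n) set" and c :: "int^'n \<Rightarrow> complex"
    and \<rho> :: "int^'n \<Rightarrow> real" and \<rho>h :: "real^'n \<Rightarrow> real"
  defines "K \<equiv> convex hull (rvec ` A)"
  defines "P \<equiv> max_lin_domains \<rho>h K"
  assumes finA: "finite A" and zeroA: "0 \<in> A"
    and c_nz: "\<forall>\<alpha>\<in>A. c \<alpha> \<noteq> 0"
    and rho_restr: "\<forall>\<alpha>\<in>A. \<rho> \<alpha> = \<rho>h (rvec \<alpha>)"
    and convex_rho: "convex_on K \<rho>h"
    and pl_finite: "finite P"
    and pl_cover: "\<Union>P = K"
    and decomp_faces: "\<forall>D1\<in>P. \<forall>D2\<in>P. (D1 \<inter> D2) face_of D1"
    and vertices: "(\<Union>D\<in>P. {v. v extreme_point_of D}) = rvec ` A"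
    and unimodular: "\<forall>D\<in>P. \<forall>F. F face_of D \<and> F \<noteq> {} \<longrightarrow>
                       (\<exists>J. lattice_congruent F (std_simplex J))"
    and normalized: "c 0 = 1" "\<rho> 0 = 0"
    and zero_vertex: "\<forall>D\<in>P. rvec 0 extreme_point_of D"
  shows "(\<exists>\<tau>0>0. \<forall>\<tau>. 0 < \<tau> \<and> \<tau> < \<tau>0 \<longrightarrow>
            (\<forall>x\<in>torus. critical_point (laurent_f A c \<rho> \<tau>) x \<longrightarrow> x \<in> U0 A \<rho> \<tau>))
       \<and> (\<forall>\<epsilon>>0. \<exists>\<tau>0>0. \<forall>\<tau>. 0 < \<tau> \<and> \<tau> < \<tau>0 \<longrightarrow>
            (\<forall>x\<in>torus. critical_point (laurent_f A c \<rho> \<tau>) x \<longrightarrow>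
                 norm (laurent_f A c \<rho> \<tau> x - 1) < \<epsilon>))"
proof -
  have rvec0: "rvec (0::int^'n) = 0" by (simp add: rvec_def vec_eq_iff)
  have rvec_inj: "rvec a = rvec b \<Longrightarrow> a = b" for a b :: "int^'n"
    by (simp add: rvec_def vec_eq_iff)
  have cell: "\<exists>G. finite G \<and> D = convex hull G \<and> {v. v extreme_point_of D} = G \<and>
       G \<subseteq> rvec ` A \<and> independent (G - {0})" if DP: "D \<in> P" for D
  proof -
    have ld: "lin_domain \<rho>h K D" using DP unfolding P_def max_lin_domains_def by blast
    then have "D face_of D" "D \<noteq> {}" unfolding lin_domain_def by (auto intro: face_of_refl)
    then obtain J where "lattice_congruent D (std_simplex J)" using unimodular DP by blast
    then obtain G where G: "finite G" "\<not> affine_dependent G" "D = convex hull G"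
      using cell_struct by blast
    have ext: "{v. v extreme_point_of D} = G"
      using G(2,3) extreme_point_of_convex_hull_affine_independent by blast
    have GA: "G \<subseteq> rvec ` A" using ext vertices DP by blast
    have "0 \<in> G" using zero_vertex DP ext rvec0 by auto
    then have "\<not> affine_dependent (insert 0 (G - {0}))" using G(2) by (metis insert_Diff)
    then have "independent (G - {0})"
      using affine_dependent_iff_dependent[of 0 "G - {0}"] by simp
    then show ?thesis using G ext GA by blast
  qed
  define W where "W \<xi> \<alpha> = rvec \<alpha> \<bullet> \<xi> - \<rho> \<alpha>" for \<xi> \<alpha>
  have exact: "independent (rvec ` (S - {0}))"
    if SA: "S \<subseteq> A" and Sne: "S \<noteq> {}" and dom: "\<forall>\<alpha>\<in>S. \<forall>\<gamma>\<in>A. W \<xi> \<gamma> \<le> W \<xi> \<alpha>" for S \<xi>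
  proof -
    obtain \<alpha>0 where \<alpha>0: "\<alpha>0 \<in> S" using Sne by blast
    define Mx where "Mx = W \<xi> \<alpha>0"
    define h where "h y = y \<bullet> \<xi> - Mx" for y
    have leM: "W \<xi> \<gamma> \<le> Mx" if "\<gamma> \<in> A" for \<gamma> using dom \<alpha>0 that unfolding Mx_def by blast
    have eqM: "W \<xi> \<alpha> = Mx" if "\<alpha> \<in> S" for \<alpha>
      using dom \<alpha>0 that SA leM unfolding Mx_def by (meson antisym subsetD)
    have ge: "\<rho>h y \<ge> h y" if yK: "y \<in> K" for y
    proof -
      obtain D where DP: "D \<in> P" "y \<in> D" using yK pl_cover by blast
      obtain G where G: "finite G" "D = convex hull G" "G \<subseteq> rvec ` A" using cell[OF DP(1)] by blast
      obtain a b where ab: "\<forall>z\<in>D. \<rho>h z = a \<bullet> z + b"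
        using DP(1) unfolding P_def max_lin_domains_def lin_domain_def by blast
      have "y \<in> convex hull G" using DP(2) G(2) by simp
      then have "\<exists>u. (\<forall>g\<in>G. 0 \<le> u g) \<and> sum u G = 1 \<and> (\<Sum>g\<in>G. u g *\<^sub>R g) = y"
        unfolding convex_hull_finite[OF G(1)] by simp
      then obtain u where u: "\<forall>g\<in>G. 0 \<le> u g" "sum u G = 1" "(\<Sum>g\<in>G. u g *\<^sub>R g) = y"
        by blast
      have GD: "G \<subseteq> D" unfolding G(2) by (rule hull_subset)
      have "(\<Sum>g\<in>G. u g * (a \<bullet> g + b)) = (\<Sum>g\<in>G. a \<bullet> (u g *\<^sub>R g)) + (\<Sum>g\<in>G. u g) * b"
        by (simp add: distrib_left sum.distrib sum_distrib_right)
      also have "\<dots> = a \<bullet> y + b" unfolding u(3)[symmetric] inner_sum_right using u(2) by simp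
      finally have e1: "(\<Sum>g\<in>G. u g * (a \<bullet> g + b)) = \<rho>h y" using ab DP(2) by simp
      have "(\<Sum>g\<in>G. u g * h g) = (\<Sum>g\<in>G. (u g *\<^sub>R g) \<bullet> \<xi>) - (\<Sum>g\<in>G. u g) * Mx"
        unfolding h_def by (simp add: algebra_simps sum_subtractf sum_distrib_right sum_distrib_left)
      also have "\<dots> = h y" unfolding h_def u(3)[symmetric] inner_sum_left using u(2) by simp
      finally have e2: "(\<Sum>g\<in>G. u g * h g) = h y" .
      have "(\<Sum>g\<in>G. u g * h g) \<le> (\<Sum>g\<in>G. u g * (a \<bullet> g + b))"
      proof (rule sum_mono)
        fix g assume gG: "g \<in> G"
        then obtain \<beta> where \<beta>: "\<beta> \<in> A" "g = rvec \<beta>" using G(3) by blast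
        have "a \<bullet> g + b = \<rho> \<beta>" using ab GD gG \<beta> rho_restr by auto
        moreover have "h g \<le> \<rho> \<beta>" using leM[OF \<beta>(1)] \<beta>(2) unfolding h_def W_def by simp
        ultimately show "u g * h g \<le> u g * (a \<bullet> g + b)" using u(1) gG by (simp add: mult_left_mono)
      qed
      then show ?thesis using e1 e2 by simp
    qed
    define Z where "Z = {y \<in> K. \<rho>h y = h y}"
    have inZ: "rvec \<alpha> \<in> Z" if "\<alpha> \<in> S" for \<alpha>
    proof -
      have "\<alpha> \<in> A" using that SA by blast
      then show ?thesis using eqM[OF that] rho_restr unfolding Z_def h_def W_def K_def
        by (auto intro: hull_inc)
    qed
    then have Zne: "Z \<noteq> {}" using \<alpha>0 by blast
    have cvK: "convex K" unfolding K_def by simp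
    have cvZ: "convex Z" unfolding convex_alt
    proof (intro ballI allI impI)
      fix y1 y2 and t :: real assume y: "y1 \<in> Z" "y2 \<in> Z" and t: "0 \<le> t \<and> t \<le> 1"
      let ?p = "(1 - t) *\<^sub>R y1 + t *\<^sub>R y2"
      have pK: "?p \<in> K" using y t cvK unfolding Z_def convex_alt by blast
      have "\<rho>h ?p \<le> (1 - t) * \<rho>h y1 + t * \<rho>h y2"
        using convex_onD[OF convex_rho] t y unfolding Z_def by blast
      also have "\<dots> = h ?p"
      proof -
        have r: "\<rho>h y1 = y1 \<bullet> \<xi> - Mx" "\<rho>h y2 = y2 \<bullet> \<xi> - Mx" using y unfolding Z_def h_def by auto
        show ?thesis unfolding r h_def by (simp add: algebra_simps inner_add_left)
      qed
      finally show "?p \<in> Z" using ge[OF pK] pK unfolding Z_def by simp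
    qed
    have linZ: "lin_domain \<rho>h K Z" unfolding lin_domain_def
    proof (intro conjI)
      show "\<exists>a b. \<forall>x\<in>Z. \<rho>h x = a \<bullet> x + b"
        by (rule exI[of _ \<xi>], rule exI[of _ "- Mx"]) (simp add: Z_def h_def inner_commute)
    qed (use Zne cvZ Z_def in auto)
    obtain D where D: "D \<in> P" "Z \<subseteq> D" using lin_domain_in_max[OF linZ] unfolding P_def by blast
    obtain G where G: "{v. v extreme_point_of D} = G" "independent (G - {0})" using cell[OF D(1)] by blast
    have "rvec ` (S - {0}) \<subseteq> G - {0}"
    proof
      fix v assume "v \<in> rvec ` (S - {0})"
      then obtain \<alpha> where \<alpha>: "\<alpha> \<in> S" "\<alpha> \<noteq> 0" "v = rvec \<alpha>" by blast
      have \<alpha>A: "\<alpha> \<in> A" using \<alpha> SA by blast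
      have "rvec \<alpha> \<in> D" using inZ[OF \<alpha>(1)] D by blast
      obtain D' where D': "D' \<in> P" "rvec \<alpha> extreme_point_of D'" using vertices \<alpha>A by blast
      have "(D' \<inter> D) face_of D'" using decomp_faces D'(1) D(1) by blast
      then have "rvec \<alpha> extreme_point_of (D' \<inter> D)"
        using D'(2) \<open>rvec \<alpha> \<in> D\<close> extreme_point_of_face extreme_point_of_def by blast
      moreover have "(D \<inter> D') face_of D" using decomp_faces D(1) D'(1) by blast
      ultimately have "rvec \<alpha> extreme_point_of D" using extreme_point_of_face by (metis Int_commute)
      moreover have "rvec \<alpha> \<noteq> 0" using \<alpha>(2) rvec_inj rvec0 by metis
      ultimately show "v \<in> G - {0}" using G(1) \<alpha>(3) by auto
    qed
    then show ?thesis using G(2) independent_mono by blast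
  qed
  define bad where "bad S \<longleftrightarrow> \<not> independent (rvec ` (S - {0}))" for S :: "(int^'n) set"
  have gapS: "\<exists>e>0. \<forall>\<xi>. \<not> (\<forall>\<alpha>\<in>S. \<forall>\<gamma>\<in>A. W \<xi> \<gamma> - W \<xi> \<alpha> \<le> e)"
    if SA: "S \<subseteq> A" and bS: "bad S" for S
  proof -
    have Sne: "S \<noteq> {}" using bS unfolding bad_def by (auto simp: independent_empty)
    have nofeas: "\<not> (\<exists>\<xi>. \<forall>p\<in>S \<times> A. (rvec (snd p) - rvec (fst p)) \<bullet> \<xi> \<le> \<rho> (snd p) - \<rho> (fst p))"
    proof
      assume "\<exists>\<xi>. \<forall>p\<in>S \<times> A. (rvec (snd p) - rvec (fst p)) \<bullet> \<xi> \<le> \<rho> (snd p) - \<rho> (fst p)"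
      then obtain \<xi> where \<xi>: "\<forall>p\<in>S \<times> A. (rvec (snd p) - rvec (fst p)) \<bullet> \<xi> \<le> \<rho> (snd p) - \<rho> (fst p)"
        by blast
      have "\<forall>\<alpha>\<in>S. \<forall>\<gamma>\<in>A. W \<xi> \<gamma> \<le> W \<xi> \<alpha>"
      proof (intro ballI)
        fix \<alpha> \<gamma> assume "\<alpha> \<in> S" "\<gamma> \<in> A"
        then have "(rvec \<gamma> - rvec \<alpha>) \<bullet> \<xi> \<le> \<rho> \<gamma> - \<rho> \<alpha>" using \<xi> by force
        then show "W \<xi> \<gamma> \<le> W \<xi> \<alpha>" unfolding W_def by (simp add: inner_diff_left)
      qed
      then show False using exact[OF SA Sne] bS unfolding bad_def by blast
    qed
    have finSA: "finite (S \<times> A)" using finite_subset[OF SA finA] finA by simp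
    obtain l where l: "\<forall>p\<in>S \<times> A. 0 \<le> l p"
      "(\<Sum>p\<in>S \<times> A. l p *\<^sub>R (rvec (snd p) - rvec (fst p))) = 0"
      "(\<Sum>p\<in>S \<times> A. l p * (\<rho> (snd p) - \<rho> (fst p))) < 0"
      using farkas[OF finSA nofeas] by blast
    define \<kappa> where "\<kappa> = - (\<Sum>p\<in>S \<times> A. l p * (\<rho> (snd p) - \<rho> (fst p)))"
    define \<Lambda> where "\<Lambda> = (\<Sum>p\<in>S \<times> A. l p)"
    have \<kappa>0: "\<kappa> > 0" using l(3) unfolding \<kappa>_def by simp
    have \<Lambda>0: "\<Lambda> \<ge> 0" using l(1) unfolding \<Lambda>_def by (intro sum_nonneg) blast
    define e where "e = \<kappa> / (\<Lambda> + 1)"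
    have e0: "e > 0" using \<kappa>0 \<Lambda>0 unfolding e_def by simp
    have "\<not> (\<forall>\<alpha>\<in>S. \<forall>\<gamma>\<in>A. W \<xi> \<gamma> - W \<xi> \<alpha> \<le> e)" for \<xi>
    proof
      assume H: "\<forall>\<alpha>\<in>S. \<forall>\<gamma>\<in>A. W \<xi> \<gamma> - W \<xi> \<alpha> \<le> e"
      have "(\<Sum>p\<in>S \<times> A. l p * (W \<xi> (snd p) - W \<xi> (fst p))) =
          (\<Sum>p\<in>S \<times> A. (l p *\<^sub>R (rvec (snd p) - rvec (fst p))) \<bullet> \<xi>) -
          (\<Sum>p\<in>S \<times> A. l p * (\<rho> (snd p) - \<rho> (fst p)))"
        unfolding W_def sum_subtractf[symmetric]
        by (rule sum.cong[OF refl]) (simp add: algebra_simps inner_diff_left)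
      also have "\<dots> = \<kappa>" unfolding inner_sum_left[symmetric] l(2) \<kappa>_def by simp
      finally have eq: "(\<Sum>p\<in>S \<times> A. l p * (W \<xi> (snd p) - W \<xi> (fst p))) = \<kappa>" .
      have "(\<Sum>p\<in>S \<times> A. l p * (W \<xi> (snd p) - W \<xi> (fst p))) \<le> (\<Sum>p\<in>S \<times> A. l p * e)"
        using H l(1) by (intro sum_mono mult_left_mono) auto
      also have "\<dots> = \<Lambda> * e" unfolding \<Lambda>_def by (simp add: sum_distrib_right)
      also have "\<dots> < \<kappa>" using \<kappa>0 \<Lambda>0 unfolding e_def by (simp add: field_simps)
      finally show False using eq by simp
    qed
    then show ?thesis using e0 by blast
  qed
  define ef where "ef S = (SOME e. e > 0 \<and> (\<forall>\<xi>. \<not> (\<forall>\<alpha>\<in>S. \<forall>\<gamma>\<in>A. W \<xi> \<gamma> - W \<xi> \<alpha> \<le> e)))" for S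
  have ef: "ef S > 0 \<and> (\<forall>\<xi>. \<not> (\<forall>\<alpha>\<in>S. \<forall>\<gamma>\<in>A. W \<xi> \<gamma> - W \<xi> \<alpha> \<le> ef S))"
    if "S \<subseteq> A" "bad S" for S
    unfolding ef_def using gapS[OF that] by (rule someI_ex)
  define \<eta> where "\<eta> = Min (insert 1 (ef ` {S. S \<subseteq> A \<and> bad S}))"
  have finbad: "finite {S. S \<subseteq> A \<and> bad S}" using finA by simp
  have \<eta>0: "\<eta> > 0" unfolding \<eta>_def using finbad ef by (auto simp: Min_gr_iff)
  have indep: "independent (rvec ` ({\<alpha>\<in>A. \<forall>\<gamma>\<in>A. W \<xi> \<gamma> - W \<xi> \<alpha> \<le> \<eta>} - {0}))" for \<xi>
  proof (rule ccontr)
    let ?S = "{\<alpha>\<in>A. \<forall>\<gamma>\<in>A. W \<xi> \<gamma> - W \<xi> \<alpha> \<le> \<eta>}"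
    assume "\<not> independent (rvec ` (?S - {0}))"
    then have b: "bad ?S" unfolding bad_def .
    have mem: "ef ?S \<in> insert 1 (ef ` {S. S \<subseteq> A \<and> bad S})" using b by blast
    have "Min (insert 1 (ef ` {S. S \<subseteq> A \<and> bad S})) \<le> ef ?S"
      by (rule Min_le[OF _ mem]) (simp add: finbad)
    then have "\<eta> \<le> ef ?S" unfolding \<eta>_def[symmetric] .
    then have "\<forall>\<alpha>\<in>?S. \<forall>\<gamma>\<in>A. W \<xi> \<gamma> - W \<xi> \<alpha> \<le> ef ?S" by force
    moreover have "?S \<subseteq> A" by blast
    ultimately show False using ef[of ?S] b by blast
  qed
  define lf where "lf B v = (SOME l::real^'n. l \<bullet> v = 1 \<and> (\<forall>u\<in>B-{v}. l \<bullet> u = 0))" for B v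
  have lf: "lf B v \<bullet> v = 1 \<and> (\<forall>u\<in>B-{v}. lf B v \<bullet> u = 0)" if indB: "independent B" and vB: "v \<in> B" for B v
  proof -
    have nv: "v \<notin> span (B - {v})" using indB vB dependent_def by blast
    obtain y z where yz: "y \<in> span (B-{v})" "\<And>w. w \<in> span (B-{v}) \<Longrightarrow> orthogonal z w" "v = y + z"
      using orthogonal_subspace_decomp_exists by blast
    have "z \<noteq> 0" using nv yz by auto
    have zy: "z \<bullet> y = 0" using yz(2)[OF yz(1)] unfolding orthogonal_def .
    define l where "l = (1 / (z \<bullet> z)) *\<^sub>R z"
    have "l \<bullet> v = 1" using \<open>z \<noteq> 0\<close> zy yz(3) unfolding l_def by (simp add: inner_add_right)
    moreover have "l \<bullet> u = 0" if uB: "u \<in> B - {v}" for u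
      using yz(2)[OF span_base[OF uB]] unfolding l_def orthogonal_def by simp
    ultimately have "\<exists>l. l \<bullet> v = 1 \<and> (\<forall>u\<in>B-{v}. l \<bullet> u = 0)" by blast
    then show ?thesis unfolding lf_def by (rule someI_ex)
  qed
  define Cbig where "Cbig = (\<Sum>S\<in>Pow A. \<Sum>\<beta>\<in>S. \<Sum>\<alpha>\<in>A. \<bar>lf (rvec ` (S - {0})) (rvec \<beta>) \<bullet> rvec \<alpha>\<bar> * norm (c \<alpha>))"
  have Cbig0: "Cbig \<ge> 0" unfolding Cbig_def by (intro sum_nonneg) auto
  have Cbig_ge: "(\<Sum>\<alpha>\<in>A. \<bar>lf (rvec ` (S - {0})) (rvec \<beta>) \<bullet> rvec \<alpha>\<bar> * norm (c \<alpha>)) \<le> Cbig"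
    if SA: "S \<subseteq> A" and \<beta>S: "\<beta> \<in> S" for S \<beta>
  proof -
    have finS: "finite S" using finite_subset[OF SA finA] .
    have "(\<Sum>\<alpha>\<in>A. \<bar>lf (rvec ` (S - {0})) (rvec \<beta>) \<bullet> rvec \<alpha>\<bar> * norm (c \<alpha>))
        \<le> (\<Sum>\<beta>\<in>S. \<Sum>\<alpha>\<in>A. \<bar>lf (rvec ` (S - {0})) (rvec \<beta>) \<bullet> rvec \<alpha>\<bar> * norm (c \<alpha>))"
      by (rule member_le_sum[OF \<beta>S _ finS]) (auto intro: sum_nonneg)
    also have "\<dots> \<le> Cbig" unfolding Cbig_def
      by (rule member_le_sum) (use SA finA in \<open>auto intro!: sum_nonneg\<close>)
    finally show ?thesis .
  qed
  define cmin where "cmin = Min ((\<lambda>\<alpha>. norm (c \<alpha>)) ` A)"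
  have cmin0: "cmin > 0" unfolding cmin_def using finA zeroA c_nz by (subst Min_gr_iff) auto
  have cmin_le: "cmin \<le> norm (c \<alpha>)" if "\<alpha> \<in> A" for \<alpha>
    unfolding cmin_def using finA that by (intro Min_le) auto
  define Csum where "Csum = (\<Sum>\<alpha>\<in>A. norm (c \<alpha>))"
  have Csum0: "Csum \<ge> 0" unfolding Csum_def by (simp add: sum_nonneg)
  define m where "m \<tau> x \<alpha> = c \<alpha> * complex_of_real (\<tau> powr \<rho> \<alpha>) * (\<Prod>i\<in>UNIV. (x$i) powi (\<alpha>$i))"
    for \<tau> x \<alpha>
  have normm: "norm (m \<tau> x \<alpha>) = norm (c \<alpha>) * exp ((- ln \<tau>) * W (Log_map \<tau> x) \<alpha>)"
    if "x \<in> torus" "0 < \<tau>" "\<tau> < 1" for x \<tau> \<alpha>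
    unfolding m_def W_def using norm_monomial[OF that] .
  have keyK: "\<exists>\<gamma>\<in>A. W (Log_map \<tau> x) \<gamma> > W (Log_map \<tau> x) \<beta> + \<eta>/2"
    if t0: "0 < \<tau>" and t1: "\<tau> < 1" and small: "exp (ln \<tau> * (\<eta>/2)) * Cbig < cmin"
      and xt: "x \<in> torus" and cp: "critical_point (laurent_f A c \<rho> \<tau>) x"
      and \<beta>A: "\<beta> \<in> A" and \<beta>0: "\<beta> \<noteq> 0" for \<tau> x \<beta>
  proof (rule ccontr)
    define \<xi> where "\<xi> = Log_map \<tau> x"
    define L where "L = - ln \<tau>"
    have L0: "L > 0" unfolding L_def using t0 t1 by simp
    assume "\<not> (\<exists>\<gamma>\<in>A. W (Log_map \<tau> x) \<gamma> > W (Log_map \<tau> x) \<beta> + \<eta>/2)"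
    then have H\<beta>: "\<forall>\<gamma>\<in>A. W \<xi> \<gamma> \<le> W \<xi> \<beta> + \<eta>/2" unfolding \<xi>_def by (auto simp: not_less)
    define S where "S = {\<alpha>\<in>A. \<forall>\<gamma>\<in>A. W \<xi> \<gamma> - W \<xi> \<alpha> \<le> \<eta>}"
    have \<beta>S: "\<beta> \<in> S" using H\<beta> \<beta>A \<eta>0 unfolding S_def by force
    have SA: "S \<subseteq> A" unfolding S_def by blast
    define B where "B = rvec ` (S - {0})"
    have indB: "independent B" using indep[of \<xi>] unfolding B_def S_def .
    have \<beta>B: "rvec \<beta> \<in> B" using \<beta>S \<beta>0 unfolding B_def by blast
    define lv where "lv = lf B (rvec \<beta>)"
    have lv1: "lv \<bullet> rvec \<beta> = 1" and lv0: "\<forall>u\<in>B-{rvec \<beta>}. lv \<bullet> u = 0"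
      using lf[OF indB \<beta>B] unfolding lv_def by auto
    have zero_on: "lv \<bullet> rvec \<alpha> = 0" if "\<alpha> \<in> S" "\<alpha> \<noteq> \<beta>" for \<alpha>
    proof (cases "\<alpha> = 0")
      case True then show ?thesis using rvec0 by simp
    next
      case False
      then have "rvec \<alpha> \<in> B - {rvec \<beta>}" using that rvec_inj unfolding B_def by blast
      then show ?thesis using lv0 by blast
    qed
    have eul: "(\<Sum>\<alpha>\<in>A. of_int (\<alpha>$j) * m \<tau> x \<alpha>) = 0" for j
      using euler[OF finA xt cp] unfolding m_def .
    have lin0: "(\<Sum>\<alpha>\<in>A. complex_of_real (lv \<bullet> rvec \<alpha>) * m \<tau> x \<alpha>) = 0"
    proof -
      have "(\<Sum>\<alpha>\<in>A. complex_of_real (lv \<bullet> rvec \<alpha>) * m \<tau> x \<alpha>) =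
          (\<Sum>\<alpha>\<in>A. \<Sum>j\<in>UNIV. complex_of_real (lv$j) * (of_int (\<alpha>$j) * m \<tau> x \<alpha>))"
        unfolding inner_vec_def rvec_def by (simp add: sum_distrib_right sum_distrib_left mult_ac)
      also have "\<dots> = (\<Sum>j\<in>UNIV. complex_of_real (lv$j) * (\<Sum>\<alpha>\<in>A. of_int (\<alpha>$j) * m \<tau> x \<alpha>))"
        by (simp add: sum.swap[of _ A] sum_distrib_left)
      also have "\<dots> = 0" using eul by simp
      finally show ?thesis .
    qed
    have "(\<Sum>\<alpha>\<in>A. complex_of_real (lv \<bullet> rvec \<alpha>) * m \<tau> x \<alpha>) =
        complex_of_real (lv \<bullet> rvec \<beta>) * m \<tau> x \<beta> + (\<Sum>\<alpha>\<in>A-{\<beta>}. complex_of_real (lv \<bullet> rvec \<alpha>) * m \<tau> x \<alpha>)"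
      using \<beta>A finA by (simp add: sum.remove)
    also have "(\<Sum>\<alpha>\<in>A-{\<beta>}. complex_of_real (lv \<bullet> rvec \<alpha>) * m \<tau> x \<alpha>) =
        (\<Sum>\<alpha>\<in>A-S. complex_of_real (lv \<bullet> rvec \<alpha>) * m \<tau> x \<alpha>)"
      by (rule sum.mono_neutral_right) (use finA \<beta>S zero_on in auto)
    finally have "m \<tau> x \<beta> + (\<Sum>\<alpha>\<in>A-S. complex_of_real (lv \<bullet> rvec \<alpha>) * m \<tau> x \<alpha>) = 0"
      using lin0 lv1 by simp
    then have m\<beta>: "m \<tau> x \<beta> = - (\<Sum>\<alpha>\<in>A-S. complex_of_real (lv \<bullet> rvec \<alpha>) * m \<tau> x \<alpha>)"
      by (simp add: eq_neg_iff_add_eq_0)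
    have "norm (m \<tau> x \<beta>) \<le> (\<Sum>\<alpha>\<in>A-S. \<bar>lv \<bullet> rvec \<alpha>\<bar> * norm (m \<tau> x \<alpha>))"
      unfolding m\<beta> norm_minus_cancel by (rule order_trans[OF norm_sum]) (simp add: norm_mult)
    also have "\<dots> \<le> (\<Sum>\<alpha>\<in>A-S. \<bar>lv \<bullet> rvec \<alpha>\<bar> * (norm (c \<alpha>) * (exp (L * W \<xi> \<beta>) * exp (ln \<tau> * (\<eta>/2)))))"
    proof (rule sum_mono)
      fix \<alpha> assume \<alpha>: "\<alpha> \<in> A - S"
      then obtain \<gamma> where "\<gamma> \<in> A" "W \<xi> \<gamma> - W \<xi> \<alpha> > \<eta>" unfolding S_def by force
      then have "W \<xi> \<alpha> < W \<xi> \<beta> - \<eta>/2" using H\<beta> by force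
      then have "L * W \<xi> \<alpha> \<le> L * (W \<xi> \<beta> - \<eta>/2)" using L0 by simp
      also have "\<dots> = L * W \<xi> \<beta> + ln \<tau> * (\<eta>/2)" unfolding L_def by (simp add: algebra_simps)
      finally have "exp (L * W \<xi> \<alpha>) \<le> exp (L * W \<xi> \<beta>) * exp (ln \<tau> * (\<eta>/2))"
        by (simp add: exp_add[symmetric])
      then have "norm (m \<tau> x \<alpha>) \<le> norm (c \<alpha>) * (exp (L * W \<xi> \<beta>) * exp (ln \<tau> * (\<eta>/2)))"
        unfolding normm[OF xt t0 t1] \<xi>_def[symmetric] L_def[symmetric] by (simp add: mult_left_mono)
      then show "\<bar>lv \<bullet> rvec \<alpha>\<bar> * norm (m \<tau> x \<alpha>) \<le>
          \<bar>lv \<bullet> rvec \<alpha>\<bar> * (norm (c \<alpha>) * (exp (L * W \<xi> \<beta>) * exp (ln \<tau> * (\<eta>/2))))"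
        by (simp add: mult_left_mono)
    qed
    also have "\<dots> = (\<Sum>\<alpha>\<in>A-S. \<bar>lv \<bullet> rvec \<alpha>\<bar> * norm (c \<alpha>)) * (exp (L * W \<xi> \<beta>) * exp (ln \<tau> * (\<eta>/2)))"
      by (subst sum_distrib_right) (simp add: mult_ac)
    also have "\<dots> \<le> Cbig * (exp (L * W \<xi> \<beta>) * exp (ln \<tau> * (\<eta>/2)))"
    proof (rule mult_right_mono)
      have "(\<Sum>\<alpha>\<in>A-S. \<bar>lv \<bullet> rvec \<alpha>\<bar> * norm (c \<alpha>)) \<le> (\<Sum>\<alpha>\<in>A. \<bar>lv \<bullet> rvec \<alpha>\<bar> * norm (c \<alpha>))"
        by (rule sum_mono2) (use finA in auto)
      also have "\<dots> \<le> Cbig" using Cbig_ge[OF SA \<beta>S] unfolding lv_def B_def .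
      finally show "(\<Sum>\<alpha>\<in>A-S. \<bar>lv \<bullet> rvec \<alpha>\<bar> * norm (c \<alpha>)) \<le> Cbig" .
    qed simp
    finally have "norm (c \<beta>) * exp (L * W \<xi> \<beta>) \<le> Cbig * (exp (L * W \<xi> \<beta>) * exp (ln \<tau> * (\<eta>/2)))"
      unfolding normm[OF xt t0 t1] \<xi>_def[symmetric] L_def[symmetric] .
    then have "norm (c \<beta>) * exp (L * W \<xi> \<beta>) \<le> (Cbig * exp (ln \<tau> * (\<eta>/2))) * exp (L * W \<xi> \<beta>)"
      by (simp add: mult_ac)
    then have "norm (c \<beta>) \<le> Cbig * exp (ln \<tau> * (\<eta>/2))" by simp
    then have "cmin \<le> Cbig * exp (ln \<tau> * (\<eta>/2))" using cmin_le[OF \<beta>A] by linarith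
    then show False using small by (simp add: mult.commute)
  qed
  have tail: "\<exists>T>0. \<forall>\<tau>. 0 < \<tau> \<and> \<tau> < T \<longrightarrow> \<tau> < 1 \<and> exp (ln \<tau> * (\<eta>/2)) < \<delta>"
    if d0: "\<delta> > 0" for \<delta>
  proof -
    define T where "T = min (1/2) (exp (2 * ln \<delta> / \<eta>))"
    have "T > 0" unfolding T_def by simp
    moreover have "\<tau> < 1 \<and> exp (ln \<tau> * (\<eta>/2)) < \<delta>" if tt: "0 < \<tau>" "\<tau> < T" for \<tau>
    proof -
      have "\<tau> < exp (2 * ln \<delta> / \<eta>)" using tt unfolding T_def by simp
      then have "ln \<tau> < ln (exp (2 * ln \<delta> / \<eta>))" using tt(1) by (subst ln_less_cancel_iff) auto
      then have "ln \<tau> < 2 * ln \<delta> / \<eta>" by simp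
      then have "ln \<tau> * \<eta> < 2 * ln \<delta>" using \<eta>0 by (simp add: pos_less_divide_eq)
      then have "ln \<tau> * (\<eta>/2) < ln \<delta>" by simp
      then have "exp (ln \<tau> * (\<eta>/2)) < exp (ln \<delta>)" by simp
      then show ?thesis using d0 tt unfolding T_def by simp
    qed
    ultimately show ?thesis by blast
  qed
  have W0: "W \<xi> 0 = 0" for \<xi> unfolding W_def using rvec0 normalized(2) by simp
  obtain T1 where T1: "T1 > 0" "\<forall>\<tau>. 0 < \<tau> \<and> \<tau> < T1 \<longrightarrow> \<tau> < 1 \<and> exp (ln \<tau> * (\<eta>/2)) < cmin / (Cbig + 1)"
    using tail[of "cmin / (Cbig + 1)"] cmin0 Cbig0 by auto
  have mainW: "\<forall>\<beta>\<in>A-{0}. W (Log_map \<tau> x) \<beta> < - (\<eta>/2)"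
    if tt: "0 < \<tau>" "\<tau> < T1" and xt: "x \<in> torus" and cp: "critical_point (laurent_f A c \<rho> \<tau>) x" for \<tau> x
  proof -
    define \<xi> where "\<xi> = Log_map \<tau> x"
    have t1: "\<tau> < 1" and q: "exp (ln \<tau> * (\<eta>/2)) < cmin / (Cbig + 1)" using T1 tt by auto
    have "exp (ln \<tau> * (\<eta>/2)) * (Cbig + 1) < cmin" using q Cbig0 by (simp add: pos_less_divide_eq)
    then have small: "exp (ln \<tau> * (\<eta>/2)) * Cbig < cmin"
      by (smt (verit) exp_gt_zero mult_pos_pos distrib_left mult.commute)
    have K: "\<exists>\<gamma>\<in>A. W \<xi> \<gamma> > W \<xi> \<beta> + \<eta>/2" if "\<beta> \<in> A" "\<beta> \<noteq> 0" for \<beta>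
      using keyK[OF tt(1) t1 small xt cp that] unfolding \<xi>_def .
    have "Max (W \<xi> ` A) \<in> W \<xi> ` A" using finA zeroA by (intro Max_in) auto
    then obtain \<mu> where \<mu>: "\<mu> \<in> A" "W \<xi> \<mu> = Max (W \<xi> ` A)" by auto
    have \<mu>max: "W \<xi> \<gamma> \<le> W \<xi> \<mu>" if "\<gamma> \<in> A" for \<gamma> using \<mu>(2) finA that by simp
    have "\<mu> = 0"
    proof (rule ccontr)
      assume "\<mu> \<noteq> 0"
      then obtain \<gamma> where "\<gamma> \<in> A" "W \<xi> \<gamma> > W \<xi> \<mu> + \<eta>/2" using K \<mu>(1) by blast
      then show False using \<mu>max \<eta>0 by force
    qed
    then have le0: "W \<xi> \<gamma> \<le> 0" if "\<gamma> \<in> A" for \<gamma> using \<mu>max[OF that] W0 by simp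
    show ?thesis
    proof
      fix \<beta> assume "\<beta> \<in> A - {0}"
      then obtain \<gamma> where "\<gamma> \<in> A" "W \<xi> \<gamma> > W \<xi> \<beta> + \<eta>/2" using K by blast
      then show "W (Log_map \<tau> x) \<beta> < - (\<eta>/2)" using le0 unfolding \<xi>_def by force
    qed
  qed
  have part1: "\<exists>\<tau>0>0. \<forall>\<tau>. 0 < \<tau> \<and> \<tau> < \<tau>0 \<longrightarrow>
            (\<forall>x\<in>torus. critical_point (laurent_f A c \<rho> \<tau>) x \<longrightarrow> x \<in> U0 A \<rho> \<tau>)"
  proof (intro exI[of _ T1] conjI allI impI ballI)
    show "T1 > 0" by (rule T1(1))
    fix \<tau> x assume tt: "0 < \<tau> \<and> \<tau> < T1" and xt: "x \<in> torus" and cp: "critical_point (laurent_f A c \<rho> \<tau>) x"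
    have "\<forall>\<beta>\<in>A-{0}. W (Log_map \<tau> x) \<beta> < - (\<eta>/2)" using mainW tt xt cp by blast
    then have "Log_map \<tau> x \<in> Delta0 A \<rho>"
      unfolding Delta0_def using \<eta>0 rvec0 normalized(2) unfolding W_def by force
    then show "x \<in> U0 A \<rho> \<tau>" unfolding U0_def using xt by blast
  qed
  have part2: "\<forall>\<epsilon>>0. \<exists>\<tau>0>0. \<forall>\<tau>. 0 < \<tau> \<and> \<tau> < \<tau>0 \<longrightarrow>
            (\<forall>x\<in>torus. critical_point (laurent_f A c \<rho> \<tau>) x \<longrightarrow>
                 norm (laurent_f A c \<rho> \<tau> x - 1) < \<epsilon>)"
  proof (intro allI impI)
    fix \<epsilon> :: real assume e0: "\<epsilon> > 0"
    obtain T2 where T2: "T2 > 0" "\<forall>\<tau>. 0 < \<tau> \<and> \<tau> < T2 \<longrightarrow> \<tau> < 1 \<and> exp (ln \<tau> * (\<eta>/2)) < \<epsilon> / (Csum + 1)"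
      using tail[of "\<epsilon> / (Csum + 1)"] e0 Csum0 by auto
    show "\<exists>\<tau>0>0. \<forall>\<tau>. 0 < \<tau> \<and> \<tau> < \<tau>0 \<longrightarrow>
            (\<forall>x\<in>torus. critical_point (laurent_f A c \<rho> \<tau>) x \<longrightarrow>
                 norm (laurent_f A c \<rho> \<tau> x - 1) < \<epsilon>)"
    proof (intro exI[of _ "min T1 T2"] conjI allI impI ballI)
      show "min T1 T2 > 0" using T1 T2 by simp
      fix \<tau> x assume tt: "0 < \<tau> \<and> \<tau> < min T1 T2" and xt: "x \<in> torus"
        and cp: "critical_point (laurent_f A c \<rho> \<tau>) x"
      define \<xi> where "\<xi> = Log_map \<tau> x"
      define L where "L = - ln \<tau>"
      have t1: "\<tau> < 1" and q: "exp (ln \<tau> * (\<eta>/2)) < \<epsilon> / (Csum + 1)" using T2 tt by auto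
      have L0: "L > 0" unfolding L_def using tt t1 by simp
      have Wn: "\<forall>\<beta>\<in>A-{0}. W \<xi> \<beta> < - (\<eta>/2)" using mainW tt xt cp unfolding \<xi>_def by auto
      have m0: "m \<tau> x 0 = 1" unfolding m_def using normalized tt by simp
      have "laurent_f A c \<rho> \<tau> x = (\<Sum>\<alpha>\<in>A. m \<tau> x \<alpha>)" unfolding laurent_f_def m_def ..
      also have "\<dots> = m \<tau> x 0 + (\<Sum>\<alpha>\<in>A-{0}. m \<tau> x \<alpha>)" using finA zeroA by (simp add: sum.remove)
      finally have fe: "laurent_f A c \<rho> \<tau> x - 1 = (\<Sum>\<alpha>\<in>A-{0}. m \<tau> x \<alpha>)" using m0 by simp
      have "norm (laurent_f A c \<rho> \<tau> x - 1) \<le> (\<Sum>\<alpha>\<in>A-{0}. norm (m \<tau> x \<alpha>))"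
        unfolding fe by (rule norm_sum)
      also have "\<dots> \<le> (\<Sum>\<alpha>\<in>A-{0}. norm (c \<alpha>) * exp (ln \<tau> * (\<eta>/2)))"
      proof (rule sum_mono)
        fix \<alpha> assume a: "\<alpha> \<in> A - {0}"
        have "W \<xi> \<alpha> \<le> - (\<eta>/2)" using Wn a by (simp add: less_imp_le)
        then have "L * W \<xi> \<alpha> \<le> L * (- (\<eta>/2))" using L0 by (intro mult_left_mono) auto
        also have "\<dots> = ln \<tau> * (\<eta>/2)" unfolding L_def by simp
        finally have "exp (L * W \<xi> \<alpha>) \<le> exp (ln \<tau> * (\<eta>/2))" by simp
        then show "norm (m \<tau> x \<alpha>) \<le> norm (c \<alpha>) * exp (ln \<tau> * (\<eta>/2))"
          unfolding normm[OF xt tt[THEN conjunct1] t1] \<xi>_def[symmetric] L_def[symmetric]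
          by (simp add: mult_left_mono)
      qed
      also have "\<dots> = (\<Sum>\<alpha>\<in>A-{0}. norm (c \<alpha>)) * exp (ln \<tau> * (\<eta>/2))" by (simp add: sum_distrib_right)
      also have "\<dots> \<le> Csum * exp (ln \<tau> * (\<eta>/2))"
        unfolding Csum_def by (rule mult_right_mono) (auto intro: sum_mono2 finA)
      also have "\<dots> < \<epsilon>"
      proof -
        have "exp (ln \<tau> * (\<eta>/2)) * (Csum + 1) < \<epsilon>" using q Csum0 by (simp add: pos_less_divide_eq)
        then show ?thesis by (smt (verit) exp_gt_zero mult_pos_pos distrib_left mult.commute)
      qed
      finally show "norm (laurent_f A c \<rho> \<tau> x - 1) < \<epsilon>" .
    qed
  qed
  show ?thesis using part1 part2 by blast
qed


end
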